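(* Let $(X,d)$ be a geodesic metric space and let $K_0,K_1,q$ be integers with $1\le K_0<K_1$ and $q\ge 3$. Suppose every $1/q$-bigon in $X$ is $K_0/2$-thin. Suppose there are geodesics $\gamma:[0,a]\to X$, $\gamma':[0,a']\to X$ with $\gamma(0)=\gamma'(0)$, and real numbers $R>0$, $r_0>0$ with $R+r_0\le\min(a,a')$, such that $d(\gamma(R+r),\gamma'(R+r))\in[K_0,K_1]$ for all $r\in(0,r_0)$. Then $$r_0\le \big(q(K_1-K_0)+1\big)\big(2^{qK_1+1}-1\big)qK_1+1.$$
   Context: A geodesic is a map $\gamma:[0,a]\to X$ with $d(\gamma(u),\gamma(v))=|u-v|$. For $q\ge0$, a $(1,q)$-quasigeodesic is a continuous map $\gamma:[0,L]\to X$ with $|t-t'|-q\le d(\gamma(t),\gamma(t'))\le |t-t'|+q$ for all $t,t'\in[0,L]$; its endpoints are $\gamma(0),\gamma(L)$. A $q$-bigon is a pair of $(1,q)$-quasigeodesics with the same endpoints; their images are its sides. For $K\ge0$ a $q$-bigon is $K$-fat if some point of one side is at distance $\ge K$ from (every point of) the other side, and $K$-thin if it is not $K$-fat. *)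

theory Defs
  imports "HOL-Analysis.Analysis"
begin

definition geodesic :: "(real \<Rightarrow> 'a::metric_space) \<Rightarrow> real \<Rightarrow> bool" where
  "geodesic \<gamma> a \<longleftrightarrow> a \<ge> 0 \<and>
     (\<forall>u\<in>{0..a}. \<forall>v\<in>{0..a}. dist (\<gamma> u) (\<gamma> v) = \<bar>u - v\<bar>)"

definition geodesic_space :: "'a::metric_space itself \<Rightarrow> bool" where
  "geodesic_space TYPE('a) \<longleftrightarrow>
     (\<forall>x y::'a. \<exists>\<gamma> a. geodesic \<gamma> a \<and> \<gamma> 0 = x \<and> \<gamma> a = y)"

definition quasigeodesic :: "real \<Rightarrow> (real \<Rightarrow> 'a::metric_space) \<Rightarrow> real \<Rightarrow> bool" where
  "quasigeodesic q \<gamma> L \<longleftrightarrow> L \<ge> 0 \<and> continuous_on {0..L} \<gamma> \<and>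
     (\<forall>t\<in>{0..L}. \<forall>t'\<in>{0..L}.
        \<bar>t - t'\<bar> - q \<le> dist (\<gamma> t) (\<gamma> t') \<and> dist (\<gamma> t) (\<gamma> t') \<le> \<bar>t - t'\<bar> + q)"

definition bigon :: "real \<Rightarrow> (real \<Rightarrow> 'a::metric_space) \<Rightarrow> real \<Rightarrow> (real \<Rightarrow> 'a) \<Rightarrow> real \<Rightarrow> bool" where
  "bigon q \<gamma>1 L1 \<gamma>2 L2 \<longleftrightarrow> quasigeodesic q \<gamma>1 L1 \<and> quasigeodesic q \<gamma>2 L2 \<and>
     \<gamma>1 0 = \<gamma>2 0 \<and> \<gamma>1 L1 = \<gamma>2 L2"

definition fat_bigon :: "real \<Rightarrow> (real \<Rightarrow> 'a::metric_space) \<Rightarrow> real \<Rightarrow> (real \<Rightarrow> 'a) \<Rightarrow> real \<Rightarrow> bool" where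
  "fat_bigon K \<gamma>1 L1 \<gamma>2 L2 \<longleftrightarrow>
     (\<exists>p\<in>\<gamma>1 ` {0..L1}. \<forall>x\<in>\<gamma>2 ` {0..L2}. dist p x \<ge> K) \<or>
     (\<exists>p\<in>\<gamma>2 ` {0..L2}. \<forall>x\<in>\<gamma>1 ` {0..L1}. dist p x \<ge> K)"

definition thin_bigon :: "real \<Rightarrow> (real \<Rightarrow> 'a::metric_space) \<Rightarrow> real \<Rightarrow> (real \<Rightarrow> 'a) \<Rightarrow> real \<Rightarrow> bool" where
  "thin_bigon K \<gamma>1 L1 \<gamma>2 L2 \<longleftrightarrow> \<not> fat_bigon K \<gamma>1 L1 \<gamma>2 L2"

end

theory Submission
  imports Defs
begin

lemma geo_dist:
  "geodesic g a \<Longrightarrow> u \<in> {0..a} \<Longrightarrow> v \<in> {0..a} \<Longrightarrow> dist (g u) (g v) = \<bar>u - v\<bar>"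
  by (simp add: geodesic_def)

lemma lip_qg:
  fixes P :: "real \<Rightarrow> 'a::metric_space"
  assumes L: "L \<ge> 0" and lip: "\<forall>t\<in>{0..L}. \<forall>t'\<in>{0..L}. dist (P t) (P t') \<le> \<bar>t - t'\<bar>"
    and ex: "L \<le> dist (P 0) (P L) + eps" and e0: "eps \<ge> 0"
  shows "quasigeodesic eps P L"
proof -
  have "1-lipschitz_on {0..L} P"
    unfolding lipschitz_on_def using lip by (auto simp: dist_real_def)
  then have c: "continuous_on {0..L} P" by (rule lipschitz_on_continuous_on)
  have key: "t' - t - eps \<le> dist (P t) (P t')"
    if "t \<in> {0..L}" "t' \<in> {0..L}" "t \<le> t'" for t t'
  proof -
    have "dist (P 0) (P L) \<le> dist (P 0) (P t) + dist (P t) (P t') + dist (P t') (P L)"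
      using dist_triangle[of "P 0" "P L" "P t'"] dist_triangle[of "P 0" "P t'" "P t"] by linarith
    moreover have "dist (P 0) (P t) \<le> t" using lip[rule_format, of 0 t] that L by auto
    moreover have "dist (P t') (P L) \<le> L - t'" using lip[rule_format, of t' L] that L by auto
    ultimately show ?thesis using ex by linarith
  qed
  show ?thesis unfolding quasigeodesic_def
  proof (intro conjI L c ballI)
    fix t t' assume tt: "t \<in> {0..L}" "t' \<in> {0..L}"
    show "\<bar>t - t'\<bar> - eps \<le> dist (P t) (P t')"
    proof (cases "t \<le> t'")
      case True then show ?thesis using key[OF tt True] by simp
    next
      case False then show ?thesis using key[OF tt(2) tt(1)] by (simp add: dist_commute)
    qed
    show "dist (P t) (P t') \<le> \<bar>t - t'\<bar> + eps"
      using lip[rule_format, OF tt] e0 by linarith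
  qed
qed

definition cat :: "(real \<Rightarrow> 'a) \<Rightarrow> real \<Rightarrow> (real \<Rightarrow> 'a) \<Rightarrow> real \<Rightarrow> 'a" where
  "cat p1 l1 p2 = (\<lambda>t. if t \<le> l1 then p1 t else p2 (t - l1))"

lemma cat_lip:
  fixes p1 p2 :: "real \<Rightarrow> 'a::metric_space"
  assumes g1: "geodesic p1 l1" and g2: "geodesic p2 l2" and m: "p1 l1 = p2 0"
  shows "\<forall>t\<in>{0..l1+l2}. \<forall>t'\<in>{0..l1+l2}. dist (cat p1 l1 p2 t) (cat p1 l1 p2 t') \<le> \<bar>t - t'\<bar>"
proof (intro ballI)
  have l1: "l1 \<ge> 0" and l2: "l2 \<ge> 0" using g1 g2 by (auto simp: geodesic_def)
  have mixed: "dist (p1 t) (p2 (t' - l1)) \<le> \<bar>t - t'\<bar>"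
    if "t \<in> {0..l1+l2}" "t' \<in> {0..l1+l2}" "t \<le> l1" "\<not> t' \<le> l1" for t t'
  proof -
    have "dist (p1 t) (p2 (t' - l1)) \<le> dist (p1 t) (p1 l1) + dist (p2 0) (p2 (t' - l1))"
      using dist_triangle[of "p1 t" "p2 (t' - l1)" "p1 l1"] m by simp
    also have "dist (p1 t) (p1 l1) = l1 - t" using geo_dist[OF g1, of t l1] that l1 by auto
    also have "dist (p2 0) (p2 (t' - l1)) = t' - l1" using geo_dist[OF g2, of 0 "t' - l1"] that l2 by auto
    finally show ?thesis using that by linarith
  qed
  fix t t' assume tt: "t \<in> {0..l1+l2}" "t' \<in> {0..l1+l2}"
  show "dist (cat p1 l1 p2 t) (cat p1 l1 p2 t') \<le> \<bar>t - t'\<bar>"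
  proof (cases "t \<le> l1")
    case True
    show ?thesis
    proof (cases "t' \<le> l1")
      case True
      then show ?thesis using \<open>t \<le> l1\<close> tt geo_dist[OF g1, of t t'] by (simp add: cat_def)
    next
      case False
      then show ?thesis using \<open>t \<le> l1\<close> tt mixed[of t t'] by (simp add: cat_def)
    qed
  next
    case False
    show ?thesis
    proof (cases "t' \<le> l1")
      case True
      then show ?thesis using \<open>\<not> t \<le> l1\<close> tt mixed[of t' t] by (simp add: cat_def dist_commute abs_minus_commute)
    next
      case False
      then show ?thesis using \<open>\<not> t \<le> l1\<close> tt geo_dist[OF g2, of "t - l1" "t' - l1"] by (simp add: cat_def)
    qed
  qed
qed

lemma cat_ends:
  assumes g1: "geodesic p1 l1" and g2: "geodesic p2 l2" and m: "p1 l1 = p2 0"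
  shows "cat p1 l1 p2 0 = p1 0" "cat p1 l1 p2 (l1 + l2) = p2 l2"
  using g1 g2 m by (auto simp: cat_def geodesic_def)

lemma cat_qg:
  fixes p1 p2 :: "real \<Rightarrow> 'a::metric_space"
  assumes g1: "geodesic p1 l1" and g2: "geodesic p2 l2" and m: "p1 l1 = p2 0"
    and ex: "l1 + l2 \<le> dist (p1 0) (p2 l2) + eps" and e0: "eps \<ge> 0"
  shows "quasigeodesic eps (cat p1 l1 p2) (l1 + l2)"
proof (rule lip_qg)
  show "0 \<le> l1 + l2" using g1 g2 by (auto simp: geodesic_def)
  show "\<forall>t\<in>{0..l1+l2}. \<forall>t'\<in>{0..l1+l2}. dist (cat p1 l1 p2 t) (cat p1 l1 p2 t') \<le> \<bar>t - t'\<bar>"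
    by (rule cat_lip[OF g1 g2 m])
  show "l1 + l2 \<le> dist (cat p1 l1 p2 0) (cat p1 l1 p2 (l1 + l2)) + eps"
    using ex cat_ends[OF g1 g2 m] by simp
qed (rule e0)

lemma geo_exists:
  fixes x y :: "'a::metric_space"
  assumes "geodesic_space TYPE('a)"
  obtains g where "geodesic g (dist x y)" "g 0 = x" "g (dist x y) = y"
proof -
  obtain g a where g: "geodesic g a" "g 0 = x" "g a = y"
    using assms unfolding geodesic_space_def by blast
  have "dist x y = a" using g geo_dist[OF g(1), of 0 a] by (auto simp: geodesic_def)
  then show ?thesis using g that by blast
qed

lemma geo_shift:
  assumes g: "geodesic g a" and "0 \<le> u" "u \<le> U" "U \<le> a"
  shows "geodesic (\<lambda>t. g (u + t)) (U - u)"
  using assms unfolding geodesic_def by auto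

lemma no_fat:
  fixes \<gamma> \<gamma>' :: "real \<Rightarrow> 'a::metric_space"
  assumes gs: "geodesic_space TYPE('a)"
    and thin: "\<And>(\<gamma>1 :: real \<Rightarrow> 'a) L1 \<gamma>2 L2. bigon eps \<gamma>1 L1 \<gamma>2 L2 \<Longrightarrow> thin_bigon (k0 / 2) \<gamma>1 L1 \<gamma>2 L2"
    and g: "geodesic \<gamma> a" and g': "geodesic \<gamma>' a'" and o: "\<gamma> 0 = \<gamma>' 0"
    and e0: "eps \<ge> 0" and k: "0 \<le> k0" "k0 \<le> k1"
    and s: "0 \<le> s" "s \<le> u" "u + 2*k1 \<le> T" "T \<le> U" "U \<le> a" "U \<le> a'"
    and dT: "k0 \<le> dist (\<gamma> T) (\<gamma>' T)" and ds: "dist (\<gamma> s) (\<gamma>' s) \<le> k1"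
    and e1: "dist (\<gamma> s) (\<gamma>' u) - (u - s) \<le> dist (\<gamma> s) (\<gamma>' U) - (U - s) + eps"
    and e2: "dist (\<gamma> T) (\<gamma>' U) - (U - T) \<le> dist (\<gamma> s) (\<gamma>' U) - (U - s) + eps"
  shows False
proof -
  have s: "0 \<le> s" "s \<le> u" "u + 2*k1 \<le> T" "T \<le> U" "U \<le> a" "U \<le> a'" "u \<le> T" "T \<le> a'" "u \<le> a'" "T \<le> a" "u \<le> U"
    using s k by linarith+
  define l1 where "l1 = dist (\<gamma> s) (\<gamma>' u)"
  define l2 where "l2 = dist (\<gamma> T) (\<gamma>' U)"
  obtain g1 where g1: "geodesic g1 l1" "g1 0 = \<gamma> s" "g1 l1 = \<gamma>' u"
    using geo_exists[OF gs, of "\<gamma> s" "\<gamma>' u"] unfolding l1_def by blast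
  obtain g2 where g2: "geodesic g2 l2" "g2 0 = \<gamma> T" "g2 l2 = \<gamma>' U"
    using geo_exists[OF gs, of "\<gamma> T" "\<gamma>' U"] unfolding l2_def by blast
  have pA: "geodesic (\<lambda>t. \<gamma>' (u + t)) (U - u)"
    using s k by (intro geo_shift[OF g']) linarith+
  have pB: "geodesic (\<lambda>t. \<gamma> (s + t)) (T - s)"
    using s k by (intro geo_shift[OF g]) linarith+
  define A where "A = cat g1 l1 (\<lambda>t. \<gamma>' (u + t))"
  define B where "B = cat (\<lambda>t. \<gamma> (s + t)) (T - s) g2"
  have mA: "g1 l1 = \<gamma>' (u + 0)" using g1 by simp
  have mB: "\<gamma> (s + (T - s)) = g2 0" using g2 by simp
  have qA: "quasigeodesic eps A (l1 + (U - u))"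
    unfolding A_def
    by (rule cat_qg[OF g1(1) pA mA _ e0]) (use e1 g1 in \<open>simp add: l1_def\<close>)
  have qB: "quasigeodesic eps B ((T - s) + l2)"
    unfolding B_def
    by (rule cat_qg[OF pB g2(1) mB _ e0]) (use e2 g2 in \<open>simp add: l2_def\<close>)
  have eA: "A 0 = \<gamma> s" "A (l1 + (U - u)) = \<gamma>' U"
    using cat_ends[OF g1(1) pA mA] g1 unfolding A_def by simp_all
  have eB: "B 0 = \<gamma> s" "B ((T - s) + l2) = \<gamma>' U"
    using cat_ends[OF pB g2(1) mB] g2 unfolding B_def by simp_all
  have bg: "bigon eps B ((T - s) + l2) A (l1 + (U - u))"
    unfolding bigon_def using qA qB eA eB by simp
  have l2nn: "l2 \<ge> 0" unfolding l2_def by simp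
  have BT: "B (T - s) = \<gamma> T" unfolding B_def cat_def by simp
  have l1b: "l1 \<le> k1 + (u - s)"
  proof -
    have "l1 \<le> dist (\<gamma> s) (\<gamma>' s) + dist (\<gamma>' s) (\<gamma>' u)"
      unfolding l1_def by (rule dist_triangle)
    moreover have "dist (\<gamma>' s) (\<gamma>' u) = u - s" using geo_dist[OF g', of s u] s by auto
    ultimately show ?thesis using ds by linarith
  qed
  have far: "k0 / 2 \<le> dist (\<gamma> T) (A t)" if t: "t \<in> {0..l1 + (U - u)}" for t
  proof (cases "t \<le> l1")
    case True
    have "dist (\<gamma> T) (\<gamma> s) \<le> dist (\<gamma> T) (A t) + dist (A t) (\<gamma> s)" by (rule dist_triangle)
    moreover have "dist (\<gamma> T) (\<gamma> s) = T - s" using geo_dist[OF g, of T s] s by auto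
    moreover have "dist (A t) (\<gamma> s) = t"
      using True t geo_dist[OF g1(1), of t 0] g1(2) unfolding A_def cat_def by auto
    ultimately show ?thesis using True l1b s k by linarith
  next
    case False
    define t' where "t' = u + (t - l1)"
    have At: "A t = \<gamma>' t'" using False unfolding A_def cat_def t'_def by simp
    have t'r: "u \<le> t'" "t' \<le> U" using False t unfolding t'_def by auto
    have d1: "dist (\<gamma> T) (\<gamma> 0) = T" using geo_dist[OF g, of T 0] s by auto
    have d2: "dist (\<gamma>' t') (\<gamma>' 0) = t'" using geo_dist[OF g', of t' 0] s t'r by auto
    have d3: "dist (\<gamma>' T) (\<gamma>' t') = \<bar>T - t'\<bar>" using geo_dist[OF g', of T t'] s t'r by auto
    have "dist (\<gamma> T) (\<gamma> 0) \<le> dist (\<gamma> T) (\<gamma>' t') + dist (\<gamma>' t') (\<gamma>' 0)"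
      using o dist_triangle[of "\<gamma> T" "\<gamma>' 0" "\<gamma>' t'"] by simp
    moreover have "dist (\<gamma>' t') (\<gamma>' 0) \<le> dist (\<gamma>' t') (\<gamma> T) + dist (\<gamma> T) (\<gamma> 0)"
      using o dist_triangle[of "\<gamma>' t'" "\<gamma> 0" "\<gamma> T"] by simp
    moreover have "dist (\<gamma> T) (\<gamma>' T) \<le> dist (\<gamma> T) (\<gamma>' t') + dist (\<gamma>' t') (\<gamma>' T)"
      by (rule dist_triangle)
    ultimately show ?thesis using At d1 d2 d3 dT by (simp add: dist_commute abs_if split: if_splits)
  qed
  have "fat_bigon (k0 / 2) B ((T - s) + l2) A (l1 + (U - u))"
    unfolding fat_bigon_def
  proof (rule disjI1, rule bexI[of _ "B (T - s)"])
    show "\<forall>x\<in>A ` {0..l1 + (U - u)}. k0 / 2 \<le> dist (B (T - s)) x" using far BT by auto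
    show "B (T - s) \<in> B ` {0..T - s + l2}" using s l2nn by auto
  qed
  then show False using thin[OF bg] unfolding thin_bigon_def by simp
qed

lemma comb:
  fixes e :: "nat \<Rightarrow> nat \<Rightarrow> real"
  assumes ub: "\<And>i l. i \<le> l \<Longrightarrow> l \<le> N \<Longrightarrow> e i l \<le> K"
    and nf: "\<And>i j k l. i \<le> j \<Longrightarrow> j < k \<Longrightarrow> k \<le> l \<Longrightarrow> l \<le> N \<Longrightarrow>
               \<not> (e i j \<le> e i l + eps \<and> e k l \<le> e i l + eps)"
  shows "i \<le> l \<Longrightarrow> l \<le> N \<Longrightarrow> e i l > K - (real n + 1) * eps \<Longrightarrow> l - i + 2 \<le> 2 ^ (n + 1)"
proof (induction n arbitrary: i l)
  case 0
  show ?case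
  proof (rule ccontr)
    assume "\<not> ?case"
    then have "i < l" using 0 by auto
    then have "\<not> (e i i \<le> e i l + eps \<and> e l l \<le> e i l + eps)" using nf[of i i l l] 0 by auto
    moreover have "e i i \<le> K" "e l l \<le> K" using ub 0 by auto
    ultimately show False using 0 by auto
  qed
next
  case (Suc n)
  define P :: nat where "P = 2 ^ (n + 1)"
  have P1: "P \<ge> 1" unfolding P_def by simp
  have P2: "(2::nat) ^ (Suc n + 1) = 2 * P" unfolding P_def by simp
  show ?case
  proof (rule ccontr)
    assume "\<not> ?case"
    then have big: "l - i + 2 > 2 * P" using P2 by simp
    define m1 where "m1 = i + P - 1"
    define m2 where "m2 = l + 1 - P"
    have m: "i \<le> m1" "m1 < m2" "m2 \<le> l" "m1 - i = P - 1" "l - m2 = P - 1"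
      using big P1 Suc.prems unfolding m1_def m2_def by auto
    have "\<not> (e i m1 \<le> e i l + eps \<and> e m2 l \<le> e i l + eps)"
      using nf[of i m1 m2 l] m Suc.prems by auto
    then have "\<not> e i m1 \<le> e i l + eps \<or> \<not> e m2 l \<le> e i l + eps" by simp
    then show False
    proof
      assume "\<not> e i m1 \<le> e i l + eps"
      then have "e i m1 > K - (real n + 1) * eps" using Suc.prems(3) by (simp add: algebra_simps)
      then have "m1 - i + 2 \<le> P" using Suc.IH[of i m1] m Suc.prems unfolding P_def by auto
      then show False using m P1 by auto
    next
      assume "\<not> e m2 l \<le> e i l + eps"
      then have "e m2 l > K - (real n + 1) * eps" using Suc.prems(3) by (simp add: algebra_simps)
      then have "l - m2 + 2 \<le> P" using Suc.IH[of m2 l] m Suc.prems unfolding P_def by auto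
      then show False using m P1 by auto
    qed
  qed
qed

theorem theorem1p4:
  fixes K0 K1 q :: nat and \<gamma> \<gamma>' :: "real \<Rightarrow> 'a::metric_space"
    and a a' R r0 :: real
  assumes "geodesic_space TYPE('a)"
    and "1 \<le> K0" and "K0 < K1" and "q \<ge> 3"
    and thin: "\<And>(\<gamma>1 :: real \<Rightarrow> 'a) L1 \<gamma>2 L2. bigon (1 / real q) \<gamma>1 L1 \<gamma>2 L2 \<Longrightarrow>
                 thin_bigon (real K0 / 2) \<gamma>1 L1 \<gamma>2 L2"
    and "geodesic \<gamma> a" and "geodesic \<gamma>' a'" and "\<gamma> 0 = \<gamma>' 0"
    and "R > 0" and "r0 > 0" and "R + r0 \<le> min a a'"
    and "\<And>r. 0 < r \<Longrightarrow> r < r0 \<Longrightarrow>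
           real K0 \<le> dist (\<gamma> (R + r)) (\<gamma>' (R + r)) \<and> dist (\<gamma> (R + r)) (\<gamma>' (R + r)) \<le> real K1"
  shows "r0 \<le> (real q * (real K1 - real K0) + 1) * (2 ^ (q * K1 + 1) - 1) * real q * real K1 + 1"
proof (rule ccontr)
  note gs = assms(1) and g = assms(6) and g' = assms(7) and o = assms(8)
  assume neg: "\<not> r0 \<le> (real q * (real K1 - real K0) + 1) * (2 ^ (q * K1 + 1) - 1) * real q * real K1 + 1"
  define Q where "Q = q * K1"
  define N :: nat where "N = 2 ^ (Q + 1) - 1"
  define D :: real where "D = 2 * real K1"
  define sj where "sj = (\<lambda>j::nat. R + 1/2 + real j * D)"
  define e where "e = (\<lambda>i j. dist (\<gamma> (sj i)) (\<gamma>' (sj j)) - (sj j - sj i))"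
  have q3: "real q \<ge> 3" using assms(4) by simp
  have K01: "real K0 \<ge> 1" "real K0 < real K1" using assms(2,3) by auto
  have NR: "real N = 2 ^ (Q + 1) - 1"
  proof -
    have "(1::nat) \<le> 2 ^ (Q + 1)" by simp
    then show ?thesis unfolding N_def by (simp add: of_nat_diff)
  qed
  have Nnn: "real N \<ge> 0" by simp
  define c where "c = real q * (real K1 - real K0) + 1"
  have c1: "c \<ge> 1" unfolding c_def using K01 q3 by simp
  have "1 * real q \<le> c * real q" by (rule mult_right_mono) (use c1 in auto)
  then have cq: "c * real q \<ge> 3" using q3 by linarith
  have "3 * (real N * real K1) \<le> c * real q * (real N * real K1)"
    using cq by (intro mult_right_mono) auto
  moreover have "(real q * (real K1 - real K0) + 1) * (2 ^ (q * K1 + 1) - 1) * real q * real K1 + 1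
      = c * real q * (real N * real K1) + 1"
    by (simp add: c_def NR Q_def mult_ac)
  ultimately have "3 * (real N * real K1) + 1 < r0" using neg by linarith
  moreover have "real N * D = 2 * (real N * real K1)" unfolding D_def by simp
  moreover have "real N * real K1 \<ge> 0" by simp
  ultimately have bound: "1/2 + real N * D < r0" by linarith
  have Dnn: "D \<ge> 0" unfolding D_def by simp
  have win: "R < sj j \<and> sj j < R + r0" if "j \<le> N" for j
  proof -
    have "real j * D \<le> real N * D" using that Dnn by (intro mult_right_mono) auto
    moreover have "real j * D \<ge> 0" using Dnn by simp
    ultimately show ?thesis using bound unfolding sj_def by linarith
  qed
  have dj: "real K0 \<le> dist (\<gamma> (sj j)) (\<gamma>' (sj j)) \<and> dist (\<gamma> (sj j)) (\<gamma>' (sj j)) \<le> real K1"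
    if "j \<le> N" for j
    using assms(12)[of "sj j - R"] win[OF that] by simp
  have rng: "0 \<le> sj j \<and> sj j \<le> a \<and> sj j \<le> a'" if "j \<le> N" for j
    using win[OF that] assms(9,11) by auto
  have step: "sj j + 2 * real K1 \<le> sj k" if "j < k" for j k
  proof -
    have "real k \<ge> real j + 1" using that by simp
    then have "(real j + 1) * D \<le> real k * D" using Dnn by (intro mult_right_mono) auto
    then show ?thesis unfolding sj_def D_def by (simp add: algebra_simps)
  qed
  have smono: "sj j \<le> sj k" if "j \<le> k" for j k
    unfolding sj_def using that Dnn by (simp add: mult_right_mono)
  have ub: "e i l \<le> real K1" if "i \<le> l" "l \<le> N" for i l
  proof -
    have "dist (\<gamma> (sj i)) (\<gamma>' (sj l)) \<le> dist (\<gamma> (sj i)) (\<gamma>' (sj i)) + dist (\<gamma>' (sj i)) (\<gamma>' (sj l))"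
      by (rule dist_triangle)
    moreover have "dist (\<gamma>' (sj i)) (\<gamma>' (sj l)) = sj l - sj i"
      using geo_dist[OF g', of "sj i" "sj l"] rng[of i] rng[of l] that smono[OF that(1)] by auto
    ultimately show ?thesis using dj[of i] that unfolding e_def by auto
  qed
  have nf: "\<not> (e i j \<le> e i l + 1 / real q \<and> e k l \<le> e i l + 1 / real q)"
    if "i \<le> j" "j < k" "k \<le> l" "l \<le> N" for i j k l
  proof
    assume h: "e i j \<le> e i l + 1 / real q \<and> e k l \<le> e i l + 1 / real q"
    show False
    proof (rule no_fat[OF gs thin g g' o])
      show "0 \<le> 1 / real q" by simp
      show "0 \<le> real K0" "real K0 \<le> real K1" using K01 by auto
      show "0 \<le> sj i" using rng[of i] that by auto
      show "sj i \<le> sj j" using smono that by auto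
      show "sj j + 2 * real K1 \<le> sj k" using step that by auto
      show "sj k \<le> sj l" using smono that by auto
      show "sj l \<le> a" "sj l \<le> a'" using rng[of l] that by auto
      show "real K0 \<le> dist (\<gamma> (sj k)) (\<gamma>' (sj k))" using dj[of k] that by auto
      show "dist (\<gamma> (sj i)) (\<gamma>' (sj i)) \<le> real K1" using dj[of i] that by auto
      show "dist (\<gamma> (sj i)) (\<gamma>' (sj j)) - (sj j - sj i)
          \<le> dist (\<gamma> (sj i)) (\<gamma>' (sj l)) - (sj l - sj i) + 1 / real q"
        using h unfolding e_def by simp
      show "dist (\<gamma> (sj k)) (\<gamma>' (sj l)) - (sj l - sj k)
          \<le> dist (\<gamma> (sj i)) (\<gamma>' (sj l)) - (sj l - sj i) + 1 / real q"
        using h unfolding e_def by simp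
    qed
  qed
  have e0: "e 0 N \<ge> 0"
  proof -
    have "dist (\<gamma>' 0) (\<gamma>' (sj N)) \<le> dist (\<gamma>' 0) (\<gamma> (sj 0)) + dist (\<gamma> (sj 0)) (\<gamma>' (sj N))"
      by (rule dist_triangle)
    moreover have "dist (\<gamma>' 0) (\<gamma>' (sj N)) = sj N"
      using geo_dist[OF g', of 0 "sj N"] rng[of N] by auto
    moreover have "dist (\<gamma>' 0) (\<gamma> (sj 0)) = sj 0"
      using geo_dist[OF g, of 0 "sj 0"] rng[of 0] o by auto
    ultimately show ?thesis unfolding e_def by auto
  qed
  have "real K1 - (real Q + 1) * (1 / real q) = - 1 / real q"
    unfolding Q_def using q3 by (simp add: field_simps)
  moreover have "- 1 / real q < 0" using q3 by simp
  ultimately have "e 0 N > real K1 - (real Q + 1) * (1 / real q)" using e0 by linarith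
  then have "N - 0 + 2 \<le> 2 ^ (Q + 1)"
    using comb[where e=e and N=N and K="real K1" and eps="1 / real q" and i=0 and l=N and n=Q, OF ub nf] by auto
  moreover have "(1::nat) \<le> 2 ^ (Q + 1)" by simp
  ultimately show False unfolding N_def by simp
qed

end
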